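(* Assume $p$ is critical ($\mu=1$) and unbounded, and let $\sigma^2=\sum_k(k-1)^2p_k\in(0,\infty]$ be its variance (with the convention $2/\infty=0$). Then: (i) $\displaystyle\lim_{r\to\infty}\frac{q_r}{p_r}=\infty$, the limit taken along the infinite set $\{r:p_r>0\}$; (ii) for every integer $r\ge1$, $\displaystyle q_r\le\frac{p_r}{\sum_{i>r}ip_i}$; (iii) $\displaystyle\limsup_{r\to\infty}\frac{q_r^2}{p_r}\le\frac{2}{\sigma^2}$, the limsup taken along $\{r:p_r>0\}$; (iv) $\displaystyle\lim_{r\to\infty}\frac{\bar H(r)}{\bar F(r)}=\infty$; (v) for every integer $r\ge1$, $\displaystyle\bar H(r)\le\frac{\bar F(r)}{\sum_{i>r}ip_i}$; (vi) $\displaystyle\limsup_{r\to\infty}\frac{\bar H(r)^2}{\bar F(r)}\le\frac{2}{\sigma^2}$.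
   Context: Let $p=(p_0,p_1,p_2,\dots)$ be a probability distribution on the nonnegative integers with mean $\mu=\sum_k kp_k\in(0,\infty)$, and let $\tau(p)$ be a Galton–Watson tree with offspring distribution $p$: it starts with a single root at generation $0$, and every vertex independently has $k$ children with probability $p_k$. The out-degree of a vertex is its number of children. $M$ denotes the global maximal out-degree, i.e. the supremum of the out-degrees of all vertices of $\tau(p)$. $\bar F(r)=\sum_{k>r}p_k$, $H(r)=\mathbf{P}[M\le r]$, $\bar H(r)=1-H(r)$, and $q_r=\mathbf{P}[M=r]$. The distribution $p$ is called unbounded if the set $\{r:p_r>0\}$ is unbounded. *)

theory Defs
  imports "HOL-Probability.Probability"
begin

text \<open>Galton--Watson tree in the Ulam--Harris encoding. Vertices are lists of
naturals; the sample space assigns to every potential vertex u an independent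
number of children omega u with law p. The vertex u = [i1,...,in] belongs to
the tree iff for every j < n the j-th index is smaller than the number of
children of the prefix of length j.\<close>

definition GW_space :: "nat pmf \<Rightarrow> (nat list \<Rightarrow> nat) measure" where
  "GW_space p = (\<Pi>\<^sub>M u\<in>(UNIV :: nat list set). measure_pmf p)"

definition in_tree :: "(nat list \<Rightarrow> nat) \<Rightarrow> nat list \<Rightarrow> bool" where
  "in_tree \<omega> u \<longleftrightarrow> (\<forall>j < length u. u ! j < \<omega> (take j u))"

definition maxdeg :: "(nat list \<Rightarrow> nat) \<Rightarrow> enat" where
  "maxdeg \<omega> = (SUP u\<in>{u. in_tree \<omega> u}. enat (\<omega> u))"

definition GW_q :: "nat pmf \<Rightarrow> nat \<Rightarrow> real" where
  "GW_q p r = measure (GW_space p) {\<omega> \<in> space (GW_space p). maxdeg \<omega> = enat r}"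

definition GW_H :: "nat pmf \<Rightarrow> nat \<Rightarrow> real" where
  "GW_H p r = measure (GW_space p) {\<omega> \<in> space (GW_space p). maxdeg \<omega> \<le> enat r}"

definition GW_Hbar :: "nat pmf \<Rightarrow> nat \<Rightarrow> real" where
  "GW_Hbar p r = 1 - GW_H p r"

definition Fbar :: "nat pmf \<Rightarrow> nat \<Rightarrow> real" where
  "Fbar p r = (\<Sum>\<^sub>\<infinity>k\<in>{r<..}. pmf p k)"

text \<open>Variance of a critical law, in [0, \<infinity>] (extended reals).\<close>
definition variance_ext :: "nat pmf \<Rightarrow> ereal" where
  "variance_ext p = (\<Sum>k. ereal ((real k - 1)\<^sup>2 * pmf p k))"

end

theory Submission
  imports Defs
begin


lemma pow_diff_le:
  fixes a b :: real
  assumes "0 \<le> a" "a \<le> b" "b \<le> 1"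
  shows "b^k - a^k \<le> real k * (b - a)"
proof (induction k)
  case 0 then show ?case by simp
next
  case (Suc k)
  have "b^Suc k - a^Suc k = b * (b^k - a^k) + a^k * (b - a)" by (simp add: algebra_simps)
  also have "\<dots> \<le> (b^k - a^k) + (b - a)"
  proof (intro add_mono)
    have "0 \<le> b^k - a^k" using assms by (simp add: power_mono)
    then show "b * (b^k - a^k) \<le> b^k - a^k" using assms by (simp add: mult_left_le_one_le)
    show "a^k * (b - a) \<le> b - a" using assms by (simp add: mult_left_le_one_le power_le_one)
  qed
  also have "\<dots> \<le> real (Suc k) * (b - a)" using Suc by (simp add: algebra_simps)
  finally show ?case .
qed

lemma pow_diff_ge:
  fixes a b :: real
  assumes "0 \<le> a" "a \<le> b" "b \<le> 1"
  shows "real k * a^k * (b - a) \<le> b^k - a^k"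
proof (induction k)
  case 0 then show ?case by simp
next
  case (Suc k)
  have "b^Suc k - a^Suc k = b * (b^k - a^k) + a^k * (b - a)" by (simp add: algebra_simps)
  moreover have "a * (real k * a^k * (b - a)) \<le> b * (b^k - a^k)"
    using Suc assms by (intro mult_mono) (auto simp: power_mono)
  moreover have "a^Suc k * (b - a) \<le> a^k * (b - a)"
    using assms by (intro mult_right_mono) (auto intro!: mult_left_le_one_le)
  ultimately show ?case by (simp add: algebra_simps)
qed

lemma pow_diff_ge2:
  fixes a b :: real
  assumes "0 \<le> a" "a \<le> b" "b \<le> 1"
  shows "real k * (real k - 1) / 2 * a^k * (b - a)^2 \<le> real k * (b - a) - (b^k - a^k)"
proof (induction k)
  case 0 then show ?case by simp
next
  case (Suc k)
  let ?d = "b - a"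
  have d0: "0 \<le> ?d" using assms by simp
  have "real (Suc k) * ?d - (b^Suc k - a^Suc k) = real (Suc k) * ?d - b * (b^k - a^k) - a^k * ?d"
    by (simp add: algebra_simps)
  also have "\<dots> \<ge> (real k * ?d - (b^k - a^k)) + ?d * (1 - a^k)"
  proof -
    have "0 \<le> b^k - a^k" using assms by (simp add: power_mono)
    then have "b * (b^k - a^k) \<le> b^k - a^k" using assms by (simp add: mult_left_le_one_le)
    then show ?thesis by (simp add: algebra_simps)
  qed
  moreover have "?d * (real k * a^k * ?d) = real k * a^k * ?d * ?d" by (simp add: algebra_simps)
  moreover have "?d * (1 - a^k) \<ge> ?d * (real k * a^k * ?d)"
  proof (rule mult_left_mono[OF _ d0])
    have "real k * a^k * (1 - a) \<le> 1^k - a^k"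
      using pow_diff_ge[of a 1 k] assms by simp
    moreover have "real k * a^k * ?d \<le> real k * a^k * (1 - a)"
      using assms by (intro mult_left_mono) auto
    ultimately show "real k * a^k * ?d \<le> 1 - a^k" by simp
  qed
  moreover have "real k * (real k - 1) / 2 * a^Suc k * ?d^2 \<le> real k * (real k - 1) / 2 * a^k * ?d^2"
  proof -
    have "a^Suc k \<le> a^k" using assms by (auto intro!: mult_left_le_one_le)
    moreover have "0 \<le> real k * (real k - 1) / 2"
      by (cases k) auto
    ultimately show ?thesis
      by (intro mult_right_mono mult_left_mono) auto
  qed
  moreover have "real k * a^Suc k * ?d^2 \<le> real k * a^k * ?d * ?d"
  proof -
    have "a^Suc k \<le> a^k" using assms by (auto intro!: mult_left_le_one_le)
    then have "a^Suc k * (?d * ?d) \<le> a^k * (?d * ?d)" by (rule mult_right_mono) simp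
    then have "real k * (a^Suc k * (?d * ?d)) \<le> real k * (a^k * (?d * ?d))" by (rule mult_left_mono) simp
    then show ?thesis by (simp add: power2_eq_square mult.assoc)
  qed
  moreover have "real (Suc k) * (real (Suc k) - 1)/2 * a^Suc k * ?d^2 = real k*(real k - 1)/2 * a^Suc k * ?d^2 + real k * a^Suc k * ?d^2"
    by (simp add: field_simps)
  ultimately show ?case using Suc by linarith
qed

lemma sumL0:
  fixes a b :: real and P :: "nat \<Rightarrow> real"
  assumes "0 \<le> a" "a \<le> b" "b \<le> 1" "\<And>k. 0 \<le> P k"
  shows "(b - a) * (1 - (\<Sum>k<n. real k * P k)) \<le> (b - a) - (\<Sum>k<n. P k * (b^k - a^k))"
proof -
  have "(\<Sum>k<n. P k * (b^k - a^k)) \<le> (\<Sum>k<n. P k * (real k * (b - a)))"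
    using assms pow_diff_le by (intro sum_mono mult_left_mono) auto
  also have "\<dots> = (b - a) * (\<Sum>k<n. real k * P k)"
    by (simp add: sum_distrib_left algebra_simps)
  finally show ?thesis by (simp add: algebra_simps)
qed

lemma sumL1:
  fixes a b :: real and P :: "nat \<Rightarrow> real"
  assumes "0 \<le> a" "a \<le> b" "b \<le> 1" "\<And>k. 0 \<le> P k"
  shows "(b - a) - (\<Sum>k<n. P k * (b^k - a^k)) \<le> (b - a) * (1 - (\<Sum>k<n. real k * P k * a^k))"
proof -
  have "(\<Sum>k<n. P k * (real k * a^k * (b - a))) \<le> (\<Sum>k<n. P k * (b^k - a^k))"
    using assms pow_diff_ge by (intro sum_mono mult_left_mono) auto
  moreover have "(\<Sum>k<n. P k * (real k * a^k * (b - a))) = (b - a) * (\<Sum>k<n. real k * P k * a^k)"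
    by (simp add: sum_distrib_left algebra_simps)
  ultimately show ?thesis by (simp add: algebra_simps)
qed

lemma sumL2:
  fixes a b :: real and P :: "nat \<Rightarrow> real"
  assumes "0 \<le> a" "a \<le> b" "b \<le> 1" "\<And>k. 0 \<le> P k" "K \<le> n" "(\<Sum>k<n. real k * P k) \<le> 1"
  shows "(b - a)^2 / 2 * (\<Sum>k<K. real k * (real k - 1) * P k * a^k) \<le> (b - a) - (\<Sum>k<n. P k * (b^k - a^k))"
proof -
  let ?d = "b - a"
  have t: "0 \<le> P k * (real k * ?d - (b^k - a^k))" for k
    using assms pow_diff_le[of a b k] by simp
  have "(b - a)^2 / 2 * (\<Sum>k<K. real k * (real k - 1) * P k * a^k)
      = (\<Sum>k<K. P k * (real k * (real k - 1) / 2 * a^k * ?d^2))"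
    by (simp add: sum_distrib_left) (intro sum.cong refl, simp add: field_simps)
  also have "\<dots> \<le> (\<Sum>k<K. P k * (real k * ?d - (b^k - a^k)))"
    using assms pow_diff_ge2 by (intro sum_mono mult_left_mono) auto
  also have "\<dots> \<le> (\<Sum>k<n. P k * (real k * ?d - (b^k - a^k)))"
    using assms t by (intro sum_mono2) auto
  also have "\<dots> = (\<Sum>k<n. ?d * (real k * P k)) - (\<Sum>k<n. P k * (b^k - a^k))"
    by (subst sum_subtractf[symmetric]) (intro sum.cong refl, simp add: algebra_simps)
  also have "\<dots> = ?d * (\<Sum>k<n. real k * P k) - (\<Sum>k<n. P k * (b^k - a^k))"
    by (simp add: sum_distrib_left)
  also have "\<dots> \<le> ?d - (\<Sum>k<n. P k * (b^k - a^k))"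
    using assms mult_left_mono[of "\<Sum>k<n. real k * P k" 1 ?d] by simp
  finally show ?thesis .
qed

lemma sumB:
  fixes a :: real and w :: "nat \<Rightarrow> real"
  assumes "0 \<le> a" "a \<le> 1" "\<And>k. 0 \<le> w k"
  shows "(\<Sum>k<K. w k) - (1 - a) * (\<Sum>k<K. w k * real k) \<le> (\<Sum>k<K. w k * a^k)"
proof -
  have "(\<Sum>k<K. w k) - (1 - a) * (\<Sum>k<K. w k * real k) = (\<Sum>k<K. w k * (1 - real k * (1 - a)))"
    by (simp add: sum_distrib_left sum_subtractf[symmetric] algebra_simps)
  also have "\<dots> \<le> (\<Sum>k<K. w k * a^k)"
  proof (intro sum_mono mult_left_mono)
    fix k show "1 - real k * (1 - a) \<le> a^k" using pow_diff_le[of a 1 k] assms by simp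
  qed (use assms in auto)
  finally show ?thesis .
qed

lemma partial_le_1:
  fixes P :: "nat \<Rightarrow> real"
  assumes "(\<lambda>k. real k * P k) sums 1" "\<And>k. 0 \<le> P k"
  shows "(\<Sum>k<n. real k * P k) \<le> 1"
proof -
  have "(\<Sum>k<n. real k * P k) \<le> suminf (\<lambda>k. real k * P k)"
    using assms by (intro sum_le_suminf) (auto simp: sums_summable)
  then show ?thesis using assms(1) by (simp add: sums_unique[symmetric])
qed

lemma Lim1:
  fixes P :: "nat \<Rightarrow> real"
  assumes crit: "(\<lambda>k. real k * P k) sums 1" and P0: "\<And>k. 0 \<le> P k" and e: "0 < e"
  shows "\<exists>N\<ge>1. \<forall>n\<ge>N. \<forall>a. 0 \<le> a \<and> a \<le> 1 \<and> 1 - a \<le> 1 / real N \<longrightarrow> 1 - e \<le> (\<Sum>k<n. real k * P k * a^k)"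
proof -
  have "(\<lambda>n. \<Sum>k<n. real k * P k) \<longlonglongrightarrow> 1" using crit by (simp add: sums_def)
  then obtain K where K: "\<forall>n\<ge>K. dist (\<Sum>k<n. real k * P k) 1 < e/2"
    using e unfolding LIMSEQ_def by (metis half_gt_zero)
  then have K1: "1 - e/2 \<le> (\<Sum>k<K. real k * P k)"
    by (auto simp: dist_real_def abs_if split: if_splits)
  define N where "N = nat \<lceil>2 * real K / e\<rceil> + K + 1"
  have N1: "N \<ge> 1" and NK: "N \<ge> K" by (auto simp: N_def)
  have N2: "2 * real K / e \<le> real N" unfolding N_def by linarith
  have B: "(\<Sum>k<K. real k * P k * real k) \<le> real K"
  proof -
    have "(\<Sum>k<K. real k * P k * real k) \<le> (\<Sum>k<K. real k * P k * real K)"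
      using P0 by (intro sum_mono mult_left_mono) auto
    also have "\<dots> = real K * (\<Sum>k<K. real k * P k)" by (simp add: sum_distrib_left algebra_simps)
    also have "\<dots> \<le> real K * 1" using partial_le_1[OF crit P0] by (intro mult_left_mono) auto
    finally show ?thesis by simp
  qed
  show ?thesis
  proof (intro exI[of _ N] conjI N1 allI impI)
    fix n a assume n: "N \<le> n" and a: "0 \<le> a \<and> a \<le> 1 \<and> 1 - a \<le> 1 / real N"
    have "(1 - a) * (\<Sum>k<K. real k * P k * real k) \<le> (1 / real N) * real K"
      using a B by (intro mult_mono) (auto intro!: sum_nonneg simp: P0)
    also have "\<dots> \<le> e / 2"
      using N2 e N1 by (simp add: field_simps)
    finally have E: "(1 - a) * (\<Sum>k<K. real k * P k * real k) \<le> e / 2" .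
    have "1 - e \<le> (\<Sum>k<K. real k * P k) - (1 - a) * (\<Sum>k<K. real k * P k * real k)"
      using K1 E by linarith
    also have "\<dots> \<le> (\<Sum>k<K. real k * P k * a^k)"
      using a P0 by (intro sumB) auto
    also have "\<dots> \<le> (\<Sum>k<n. real k * P k * a^k)"
      using n NK a P0 by (intro sum_mono2) auto
    finally show "1 - e \<le> (\<Sum>k<n. real k * P k * a^k)" .
  qed
qed

lemma Lim2:
  fixes P :: "nat \<Rightarrow> real"
  assumes crit: "(\<lambda>k. real k * P k) sums 1" and P0: "\<And>k. 0 \<le> P k"
    and Ps: "\<And>n. (\<Sum>k<n. P k) \<le> 1"
    and c: "ereal c < (\<Sum>k. ereal ((real k - 1)^2 * P k))"
  shows "\<exists>K N. N \<ge> 1 \<and> (\<forall>a. 0 \<le> a \<and> a \<le> 1 \<and> 1 - a \<le> 1 / real N \<longrightarrow>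
            c \<le> (\<Sum>k<K. real k * (real k - 1) * P k * a^k))"
proof -
  have "(\<Sum>k. ereal ((real k - 1)^2 * P k)) = (SUP n. \<Sum>k<n. ereal ((real k - 1)^2 * P k))"
    using P0 by (intro suminf_ereal_eq_SUP) auto
  with c obtain K0 where "ereal c < (\<Sum>k<K0. ereal ((real k - 1)^2 * P k))"
    by (auto simp: less_SUP_iff)
  then have K0: "c < (\<Sum>k<K0. (real k - 1)^2 * P k)" by simp
  define \<eta> where "\<eta> = (\<Sum>k<K0. (real k - 1)^2 * P k) - c"
  have eta: "0 < \<eta>" using K0 by (simp add: \<eta>_def)
  have "(\<lambda>n. \<Sum>k<n. real k * P k) \<longlonglongrightarrow> 1" using crit by (simp add: sums_def)
  then obtain K1 where K1: "\<forall>n\<ge>K1. dist (\<Sum>k<n. real k * P k) 1 < \<eta>/2"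
    using eta unfolding LIMSEQ_def by (metis half_gt_zero)
  define K where "K = max K0 K1"
  have KK: "1 - \<eta>/2 \<le> (\<Sum>k<K. real k * P k)"
    using K1[rule_format, of K] by (auto simp: K_def dist_real_def abs_if split: if_splits)
  have mono: "(\<Sum>k<K0. (real k - 1)^2 * P k) \<le> (\<Sum>k<K. (real k - 1)^2 * P k)"
    using P0 by (intro sum_mono2) (auto simp: K_def)
  define T where "T = (\<Sum>k<K. real k * (real k - 1) * P k)"
  have "(\<Sum>k<K. (real k - 1)^2 * P k) = T - (\<Sum>k<K. real k * P k) + (\<Sum>k<K. P k)"
    unfolding T_def by (simp add: sum_subtractf[symmetric] sum.distrib[symmetric] power2_eq_square algebra_simps)
  moreover have lin: "z6 + (z1-z6)/2 \<le> z5" if "z2 = z5 - z3 + z4" "z1 \<le> z2" "1 - (z1 - z6)/2 \<le> z3" "z4 \<le> 1"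
    for z1 z2 z3 z4 z5 z6 :: real using that by (simp add: field_simps)
  ultimately have T: "c + \<eta>/2 \<le> T" using mono KK Ps[of K] unfolding \<eta>_def by blast
  define B where "B = (\<Sum>k<K. real k * (real k - 1) * P k * real k)"
  have B0: "0 \<le> B" unfolding B_def
  proof (intro sum_nonneg)
    fix k show "0 \<le> real k * (real k - 1) * P k * real k" using P0[of k] by (cases k) auto
  qed
  define N where "N = nat \<lceil>2 * B / \<eta>\<rceil> + 1"
  have N1: "N \<ge> 1" by (simp add: N_def)
  have N2: "2 * B / \<eta> \<le> real N" unfolding N_def by linarith
  have main: "\<forall>a. 0 \<le> a \<and> a \<le> 1 \<and> 1 - a \<le> 1 / real N \<longrightarrow> c \<le> (\<Sum>k<K. real k * (real k - 1) * P k * a^k)"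
  proof (intro allI impI)
    fix a assume a: "0 \<le> a \<and> a \<le> 1 \<and> 1 - a \<le> 1 / real N"
    have w0: "0 \<le> real k * (real k - 1) * P k" for k
      using P0[of k] by (cases k) auto
    have "(1 - a) * B \<le> (1 / real N) * B" using a B0 by (intro mult_right_mono) auto
    also have "\<dots> \<le> \<eta> / 2" using N2 eta N1 by (simp add: field_simps)
    finally have E: "(1 - a) * B \<le> \<eta> / 2" .
    have "c \<le> T - (1 - a) * B" using T E by linarith
    also have "\<dots> \<le> (\<Sum>k<K. real k * (real k - 1) * P k * a^k)"
      unfolding T_def B_def using a w0 by (intro sumB) auto
    finally have "c \<le> (\<Sum>k<K. real k * (real k - 1) * P k * a^k)" .
    then show "c \<le> (\<Sum>k<K. real k * (real k - 1) * P k * a^k)" by simp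
  qed
  show ?thesis using main N1 by blast
qed

lemma limsup_conclude:
  fixes L \<sigma> :: ereal
  assumes s0: "0 \<le> \<sigma>" and H: "\<And>c. 0 < c \<Longrightarrow> ereal c < \<sigma> \<Longrightarrow> L \<le> ereal (2 / c)"
  shows "L \<le> 2 / \<sigma>"
proof (cases \<sigma>)
  case PInf
  have "L \<le> 0" 
  proof (rule ereal_le_epsilon2)
    fix e :: real assume e: "0 < e"
    have "L \<le> ereal (2 / (2 / e))" using e PInf by (intro H) auto
    then show "L \<le> 0 + ereal e" using e by simp
  qed
  then show ?thesis using PInf by simp
next
  case MInf then show ?thesis using s0 by simp
next
  case (real s)
  show ?thesis
  proof (cases "s = 0")
    case True then show ?thesis using real by (simp add: ereal_divide)
  next
    case False
    then have sp: "0 < s" using s0 real by simp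
    have "L \<le> ereal (2 / s)"
    proof (rule ereal_le_epsilon2)
      fix e :: real assume e: "0 < e"
      define c where "c = 2 / (2 / s + e)"
      have pe: "0 < 2 / s + e" using sp e by (simp add: add_pos_pos)
      have c0: "0 < c" using pe by (simp add: c_def)
      have cs: "c < s" using sp e pe unfolding c_def by (simp add: field_simps)
      have "L \<le> ereal (2 / c)" using c0 cs real by (intro H) auto
      also have "2 / c = 2 / s + e" using sp e pe by (simp add: c_def field_simps)
      finally show "L \<le> ereal (2 / s) + ereal e" by simp
    qed
    then show ?thesis using real False by (simp add: ereal_divide)
  qed
qed

lemma exp_bound_pow:
  fixes x :: real
  assumes "0 \<le> x" "real r * x \<le> 1" "2 \<le> r"
  shows "exp (-2) \<le> (1 - x)^r"
proof -
  have r2: "(2::real) \<le> real r" using assms by simp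
  have x2: "x \<le> 1/2"
  proof -
    have "2 * x \<le> real r * x" using assms r2 by (intro mult_right_mono) auto
    then show ?thesis using assms by simp
  qed
  have l: "- x - 2 * x^2 \<le> ln (1 - x)" using ln_one_minus_pos_lower_bound assms x2 by simp
  have "real r * x^2 \<le> 1/2"
  proof -
    have "real r * x^2 = (real r * x) * x" by (simp add: power2_eq_square)
    also have "\<dots> \<le> 1 * (1/2)" using assms x2 by (intro mult_mono) auto
    finally show ?thesis by simp
  qed
  then have "-2 \<le> real r * (- x - 2 * x^2)" using assms by (simp add: algebra_simps)
  also have "\<dots> \<le> real r * ln (1 - x)" using l by (intro mult_left_mono) auto
  finally have "exp (-2) \<le> exp (real r * ln (1 - x))" by simp
  also have "exp (real r * ln (1 - x)) = (1 - x)^r"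
    using x2 by (subst exp_of_nat_mult) simp
  finally show ?thesis .
qed


lemma space_GW[simp]: "space (GW_space p) = UNIV"
  by (auto simp: GW_space_def space_PiM PiE_def extensional_def)

lemma sets_GW_coord: "(\<lambda>\<omega>. \<omega> u) \<in> measurable (GW_space p) (count_space UNIV)"
proof -
  have "(\<lambda>\<omega>. \<omega> u) \<in> measurable (GW_space p) (measure_pmf p)"
    unfolding GW_space_def by (rule measurable_component_singleton) simp
  moreover have "measurable (GW_space p) (measure_pmf p) = measurable (GW_space p) (count_space UNIV)"
    by (rule measurable_cong_sets) auto
  ultimately show ?thesis by simp
qed

lemma pred_coord: "Measurable.pred (GW_space p) (\<lambda>\<omega>. P (\<omega> u))"
  using measurable_compose[OF sets_GW_coord, of "\<lambda>x. P x"] by simp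

lemma pred_in_tree: "Measurable.pred (GW_space p) (\<lambda>\<omega>. in_tree \<omega> u)"
proof -
  have *: "(\<lambda>\<omega>. in_tree \<omega> u) = (\<lambda>\<omega>. \<forall>j\<in>{..<length u}. u ! j < \<omega> (take j u))"
    by (auto simp: in_tree_def fun_eq_iff)
  show ?thesis unfolding * by (intro pred_intros_finite pred_coord) auto
qed

lemma Emax_sets: "{\<omega>. \<forall>u. in_tree \<omega> u \<longrightarrow> \<omega> u \<le> r} \<in> sets (GW_space p)"
proof -
  have "Measurable.pred (GW_space p) (\<lambda>\<omega>. \<forall>u. in_tree \<omega> u \<longrightarrow> \<omega> u \<le> r)"
    by (intro pred_intros_countable pred_intros_logic pred_in_tree pred_coord)
  then show ?thesis by (simp add: pred_def)
qed

lemma restrict_UNIV': "restrict f UNIV = f"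
  by (simp add: restrict_def)

lemma GW_prob: "prob_space (GW_space p)"
  unfolding GW_space_def by (intro prob_space_PiM) (simp add: prob_space_measure_pmf)

lemma shift_distr: "distr (GW_space p) (GW_space p) (\<lambda>\<omega> v. \<omega> (i#v)) = GW_space p"
proof -
  have "distr (PiM UNIV (\<lambda>_. measure_pmf p)) (PiM UNIV (\<lambda>_. measure_pmf p)) (\<lambda>\<omega>. \<lambda>n\<in>UNIV. \<omega> (i#n))
        = PiM UNIV (\<lambda>_. measure_pmf p)"
    by (rule distr_PiM_reindex[where f="Cons i" and K=UNIV and M="\<lambda>_. measure_pmf p", simplified])
       (auto simp: prob_space_measure_pmf)
  then show ?thesis by (simp add: GW_space_def restrict_UNIV')
qed

lemma coord_indep: "prob_space.indep_vars (GW_space p) (\<lambda>_. measure_pmf p) (\<lambda>u \<omega>. \<omega> u) UNIV"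
proof -
  interpret P: prob_space "GW_space p" by (rule GW_prob)
  interpret PP: product_prob_space "\<lambda>_. measure_pmf p" "UNIV :: nat list set"
    by unfold_locales
  have rv: "(\<lambda>\<omega>. \<omega> u) \<in> measurable (GW_space p) (measure_pmf p)" for u
  proof -
    have "(\<lambda>\<omega>. \<omega> (u::nat list)) \<in> measurable (PiM UNIV (\<lambda>_. measure_pmf p)) (measure_pmf p)"
      by (rule measurable_component_singleton) simp
    then show ?thesis by (simp only: GW_space_def)
  qed
  have "distr (GW_space p) (\<Pi>\<^sub>M i\<in>UNIV. measure_pmf p) (\<lambda>x. \<lambda>i\<in>UNIV. x i) =
     (\<Pi>\<^sub>M i\<in>UNIV. distr (GW_space p) (measure_pmf p) (\<lambda>\<omega>. \<omega> i))"
  proof -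
    have "(\<lambda>x. \<lambda>i\<in>UNIV. x i) = (\<lambda>x::nat list \<Rightarrow> nat. x)" by (simp add: restrict_UNIV')
    moreover have "distr (GW_space p) (measure_pmf p) (\<lambda>\<omega>. \<omega> i) = measure_pmf p" for i
      unfolding GW_space_def by (rule PP.PiM_component) simp
    ultimately show ?thesis unfolding GW_space_def by (simp only: distr_id)
  qed
  then show ?thesis
    by (intro iffD2[OF P.indep_vars_iff_distr_eq_PiM] rv) auto
qed

lemma shift_meas: "(\<lambda>\<omega> v. \<omega> (i#v)) \<in> measurable (GW_space p) (GW_space p)"
proof -
  have "(\<lambda>\<omega>. \<lambda>v\<in>UNIV. \<omega> (i#v)) \<in> measurable (PiM UNIV (\<lambda>_::nat list. measure_pmf p)) (PiM UNIV (\<lambda>_::nat list. measure_pmf p))"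
    by (intro measurable_restrict measurable_component_singleton) auto
  then show ?thesis by (simp add: restrict_UNIV' GW_space_def)
qed

lemma branch_prob:
  assumes E: "E \<in> sets (GW_space p)"
  shows "measure (GW_space p) {\<omega>. \<omega> [] = k \<and> (\<forall>i<k. (\<lambda>v. \<omega> (i#v)) \<in> E)}
         = pmf p k * measure (GW_space p) E ^ k"
proof -
  interpret P: prob_space "GW_space p" by (rule GW_prob)
  interpret PP: product_prob_space "\<lambda>_. measure_pmf p" "UNIV :: nat list set"
    by unfold_locales
  let ?M = "\<lambda>_::nat list. measure_pmf p"
  define K where "K j = (case j of None \<Rightarrow> {[]} | Some i \<Rightarrow> range (Cons i))" for j :: "nat option"
  have ind: "P.indep_vars (\<lambda>j. PiM (K j) ?M) (\<lambda>j \<omega>. restrict (\<lambda>u. \<omega> u) (K j)) UNIV"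
    by (rule P.indep_vars_restrict[OF coord_indep])
       (auto simp: disjoint_family_on_def K_def split: option.splits)
  define J where "J = insert None (Some ` {..<k})"
  define A where "A j = (case j of None \<Rightarrow> {f \<in> space (PiM {[]} ?M). f [] = k}
     | Some i \<Rightarrow> (\<lambda>f. \<lambda>v\<in>UNIV. f (i#v)) -` E \<inter> space (PiM (range (Cons i)) ?M))" for j
  have A: "A j \<in> sets (PiM (K j) ?M)" if "j \<in> J" for j
  proof (cases j)
    case None
    have "(\<lambda>f. f []) \<in> measurable (PiM {[]} ?M) (count_space UNIV)"
      using measurable_component_singleton[of "[]" "{[]}" ?M] by simp
    from measurable_sets[OF this, of "{k}"]
    have "(\<lambda>f. f []) -` {k} \<inter> space (PiM {[]} ?M) \<in> sets (PiM {[]} ?M)" by simp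
    moreover have "(\<lambda>f. f []) -` {k} \<inter> space (PiM {[]} ?M) = {f \<in> space (PiM {[]} ?M). f [] = k}" by auto
    ultimately show ?thesis using None by (simp add: A_def K_def)
  next
    case (Some i)
    have "(\<lambda>f. \<lambda>v\<in>UNIV. f (i#v)) \<in> measurable (PiM (range (Cons i)) ?M) (PiM UNIV ?M)"
      by (intro measurable_restrict measurable_component_singleton) auto
    from measurable_sets[OF this, of E] E show ?thesis using Some
      by (simp add: A_def K_def GW_space_def)
  qed
  have rs: "restrict f S \<in> space (PiM S ?M)" for f S
    by (simp add: space_PiM)
  have rU: "(\<lambda>v\<in>UNIV. restrict f (range (Cons i)) (i#v)) = (\<lambda>v. f (i#v))" for f i
    by (simp add: restrict_def fun_eq_iff)
  have hN: "(\<lambda>\<omega>. restrict (\<lambda>u. \<omega> u) (K None)) -` A None \<inter> space (GW_space p) = {\<omega>. \<omega> [] = k}"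
    unfolding A_def K_def using rs by simp
  have hS: "(\<lambda>\<omega>. restrict (\<lambda>u. \<omega> u) (K (Some i))) -` A (Some i) \<inter> space (GW_space p) = {\<omega>. (\<lambda>v. \<omega> (i#v)) \<in> E}" for i
    unfolding A_def K_def vimage_def using rs by (simp add: rU restrict_UNIV')
  have "P.prob (\<Inter>j\<in>J. (\<lambda>\<omega>. restrict (\<lambda>u. \<omega> u) (K j)) -` A j \<inter> space (GW_space p))
      = (\<Prod>j\<in>J. P.prob ((\<lambda>\<omega>. restrict (\<lambda>u. \<omega> u) (K j)) -` A j \<inter> space (GW_space p)))"
    by (rule P.indep_varsD[OF ind]) (auto simp: J_def A)
  also have "(\<Inter>j\<in>J. (\<lambda>\<omega>. restrict (\<lambda>u. \<omega> u) (K j)) -` A j \<inter> space (GW_space p))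
     = {\<omega>. \<omega> [] = k \<and> (\<forall>i<k. (\<lambda>v. \<omega> (i#v)) \<in> E)}"
  proof -
    have "(\<Inter>j\<in>J. (\<lambda>\<omega>. restrict (\<lambda>u. \<omega> u) (K j)) -` A j \<inter> space (GW_space p))
      = ((\<lambda>\<omega>. restrict (\<lambda>u. \<omega> u) (K None)) -` A None \<inter> space (GW_space p)) \<inter>
        (\<Inter>i\<in>{..<k}. (\<lambda>\<omega>. restrict (\<lambda>u. \<omega> u) (K (Some i))) -` A (Some i) \<inter> space (GW_space p))"
      unfolding J_def by (simp only: INF_insert image_image INF_image comp_def)
    also have "\<dots> = {\<omega>. \<omega> [] = k} \<inter> (\<Inter>i\<in>{..<k}. {\<omega>. (\<lambda>v. \<omega> (i#v)) \<in> E})"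
      by (simp only: hN hS)
    finally show ?thesis by auto
  qed
  also have "(\<Prod>j\<in>J. P.prob ((\<lambda>\<omega>. restrict (\<lambda>u. \<omega> u) (K j)) -` A j \<inter> space (GW_space p)))
     = pmf p k * measure (GW_space p) E ^ k"
  proof -
    have "P.prob ((\<lambda>\<omega>. restrict (\<lambda>u. \<omega> u) (K None)) -` A None \<inter> space (GW_space p))
        = P.prob ((\<lambda>\<omega>. \<omega> []) -` {k} \<inter> space (GW_space p))"
      by (subst hN) (simp add: vimage_def)
    also have "\<dots> = measure (distr (GW_space p) (measure_pmf p) (\<lambda>\<omega>. \<omega> [])) {k}"
      by (rule measure_distr[symmetric]) (auto simp: GW_space_def)
    also have "distr (GW_space p) (measure_pmf p) (\<lambda>\<omega>. \<omega> []) = measure_pmf p"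
      unfolding GW_space_def by (rule PP.PiM_component) simp
    also have "measure (measure_pmf p) {k} = pmf p k" by (rule measure_pmf_single)
    finally have 1: "P.prob ((\<lambda>\<omega>. restrict (\<lambda>u. \<omega> u) (K None)) -` A None \<inter> space (GW_space p)) = pmf p k" .
    have 2: "P.prob ((\<lambda>\<omega>. restrict (\<lambda>u. \<omega> u) (K (Some i))) -` A (Some i) \<inter> space (GW_space p))
        = measure (GW_space p) E" for i
    proof -
      have "P.prob ((\<lambda>\<omega>. restrict (\<lambda>u. \<omega> u) (K (Some i))) -` A (Some i) \<inter> space (GW_space p))
         = P.prob ((\<lambda>\<omega> v. \<omega> (i#v)) -` E \<inter> space (GW_space p))"
        by (subst hS) (simp add: vimage_def)
      also have "\<dots> = measure (distr (GW_space p) (GW_space p) (\<lambda>\<omega> v. \<omega> (i#v))) E"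
        by (rule measure_distr[symmetric, OF shift_meas E])
      also have "\<dots> = measure (GW_space p) E" by (simp only: shift_distr)
      finally show ?thesis .
    qed
    have o1: "P.prob ((\<lambda>\<omega>. restrict \<omega> (K None)) -` A None) = pmf p k"
      using 1 by simp
    have o2: "P.prob ((\<lambda>\<omega>. restrict \<omega> (K (Some i))) -` A (Some i)) = P.prob E" for i
      using 2[of i] by simp
    show ?thesis
      by (simp add: J_def o1 o2 prod.reindex)
  qed
  finally show ?thesis .
qed

definition Emax :: "nat \<Rightarrow> (nat list \<Rightarrow> nat) set" where
  "Emax r = {\<omega>. \<forall>u. in_tree \<omega> u \<longrightarrow> \<omega> u \<le> r}"

lemma maxdeg_le_iff: "maxdeg \<omega> \<le> enat r \<longleftrightarrow> \<omega> \<in> Emax r"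
  by (auto simp: maxdeg_def Emax_def SUP_le_iff)

lemma Emax_sets': "Emax r \<in> sets (GW_space p)"
  using Emax_sets unfolding Emax_def .

lemma GW_H_Emax: "GW_H p r = measure (GW_space p) (Emax r)"
  by (simp add: GW_H_def maxdeg_le_iff)

lemma in_tree_Nil[simp]: "in_tree \<omega> []"
  by (simp add: in_tree_def)

lemma in_tree_Cons: "in_tree \<omega> (i#v) \<longleftrightarrow> i < \<omega> [] \<and> in_tree (\<lambda>v. \<omega> (i#v)) v"
proof
  assume H: "in_tree \<omega> (i#v)"
  have "i < \<omega> []" using H[unfolded in_tree_def, rule_format, of 0] by simp
  moreover have "in_tree (\<lambda>v. \<omega> (i#v)) v" unfolding in_tree_def
  proof (intro allI impI)
    fix j assume "j < length v"
    then show "v!j < \<omega> (i # take j v)" using H[unfolded in_tree_def, rule_format, of "Suc j"] by simp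
  qed
  ultimately show "i < \<omega> [] \<and> in_tree (\<lambda>v. \<omega> (i#v)) v" by blast
next
  assume H: "i < \<omega> [] \<and> in_tree (\<lambda>v. \<omega> (i#v)) v"
  show "in_tree \<omega> (i#v)" unfolding in_tree_def
  proof (intro allI impI)
    fix j assume "j < length (i#v)"
    then show "(i#v)!j < \<omega> (take j (i#v))" using H by (cases j) (auto simp: in_tree_def)
  qed
qed

lemma Emax_decomp: "\<omega> \<in> Emax r \<longleftrightarrow> \<omega> [] \<le> r \<and> (\<forall>i<\<omega> []. (\<lambda>v. \<omega> (i#v)) \<in> Emax r)"
proof
  assume A: "\<omega> \<in> Emax r"
  have "\<omega> [] \<le> r" using A by (simp add: Emax_def)
  moreover have "(\<lambda>v. \<omega> (i#v)) \<in> Emax r" if "i < \<omega> []" for i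
    unfolding Emax_def
  proof (intro CollectI allI impI)
    fix v assume "in_tree (\<lambda>v. \<omega> (i#v)) v"
    then have "in_tree \<omega> (i#v)" using that in_tree_Cons by blast
    then show "\<omega> (i#v) \<le> r" using A by (simp add: Emax_def)
  qed
  ultimately show "\<omega> [] \<le> r \<and> (\<forall>i<\<omega> []. (\<lambda>v. \<omega> (i#v)) \<in> Emax r)" by blast
next
  assume A: "\<omega> [] \<le> r \<and> (\<forall>i<\<omega> []. (\<lambda>v. \<omega> (i#v)) \<in> Emax r)"
  show "\<omega> \<in> Emax r"
    unfolding Emax_def
  proof (intro CollectI allI impI)
    fix u assume "in_tree \<omega> u"
    then show "\<omega> u \<le> r"
    proof (cases u)
      case Nil then show ?thesis using A by simp
    next
      case (Cons i v)
      with \<open>in_tree \<omega> u\<close> have "i < \<omega> []" "in_tree (\<lambda>v. \<omega> (i#v)) v"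
        using in_tree_Cons by blast+
      then have "(\<lambda>v. \<omega> (i#v)) \<in> Emax r" using A by blast
      then show ?thesis using \<open>in_tree (\<lambda>v. \<omega> (i#v)) v\<close> Cons by (simp add: Emax_def)
    qed
  qed
qed

lemma H_fixpoint: "GW_H p r = (\<Sum>k\<le>r. pmf p k * GW_H p r ^ k)"
proof -
  interpret P: prob_space "GW_space p" by (rule GW_prob)
  define B where "B k = {\<omega>. \<omega> [] = k \<and> (\<forall>i<k. (\<lambda>v. \<omega> (i#v)) \<in> Emax r)}" for k
  have "Emax r = (\<Union>k\<in>{..r}. B k)"
  proof (rule set_eqI)
    fix \<omega>
    have "\<omega> \<in> Emax r \<longleftrightarrow> \<omega> [] \<le> r \<and> (\<forall>i<\<omega> []. (\<lambda>v. \<omega> (i#v)) \<in> Emax r)"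
      by (rule Emax_decomp)
    then show "\<omega> \<in> Emax r \<longleftrightarrow> \<omega> \<in> (\<Union>k\<in>{..r}. B k)"
      unfolding B_def by blast
  qed
  moreover have Bs: "B k \<in> sets (GW_space p)" for k
  proof -
    have s: "{\<omega>. (\<lambda>v. \<omega> (i#v)) \<in> Emax r} \<in> sets (GW_space p)" for i
      using measurable_sets[OF shift_meas Emax_sets'] by (simp add: vimage_def)
    have "B k = {\<omega>. \<omega> [] = k} \<inter> (\<Inter>i\<in>{..<k}. {\<omega>. (\<lambda>v. \<omega> (i#v)) \<in> Emax r})"
      by (auto simp: B_def)
    moreover have "{\<omega>. \<omega> [] = k} \<in> sets (GW_space p)"
      using pred_coord[where p=p and P="\<lambda>x. x = k" and u="[]"] by (simp add: pred_def)
    ultimately show ?thesis using s by auto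
  qed
  moreover have "disjoint_family_on B {..r}"
    by (auto simp: disjoint_family_on_def B_def)
  ultimately have "measure (GW_space p) (Emax r) = (\<Sum>k\<le>r. measure (GW_space p) (B k))"
    by (simp add: P.finite_measure_finite_Union image_subset_iff)
  also have "\<dots> = (\<Sum>k\<le>r. pmf p k * measure (GW_space p) (Emax r) ^ k)"
    unfolding B_def by (simp add: branch_prob[OF Emax_sets'])
  finally show ?thesis by (simp add: GW_H_Emax)
qed



lemma H_nonneg: "0 \<le> GW_H p r"
  by (simp add: GW_H_def)


lemma H_le1: "GW_H p r \<le> 1"
proof -
  interpret P: prob_space "GW_space p" by (rule GW_prob)
  show ?thesis by (simp add: GW_H_def)
qed


lemma q_eq:
  assumes "1 \<le> r"
  shows "GW_q p r = GW_H p r - GW_H p (r - 1)"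
proof -
  interpret P: prob_space "GW_space p" by (rule GW_prob)
  have "{\<omega> \<in> space (GW_space p). maxdeg \<omega> = enat r} = Emax r - Emax (r - 1)"
  proof -
    have "maxdeg \<omega> = enat r \<longleftrightarrow> maxdeg \<omega> \<le> enat r \<and> \<not> maxdeg \<omega> \<le> enat (r - 1)" for \<omega>
      using assms by (cases "maxdeg \<omega>") auto
    then show ?thesis by (auto simp: maxdeg_le_iff)
  qed
  moreover have "Emax (r - 1) \<subseteq> Emax r" by (auto simp: Emax_def)
  ultimately show ?thesis
    by (simp add: GW_q_def GW_H_Emax P.finite_measure_Diff Emax_sets')
qed


lemma H_mono: "GW_H p (r - 1) \<le> GW_H p r"
proof (cases "r = 0")
  case True then show ?thesis by simp
next
  case False
  then have "0 \<le> GW_q p r" by (simp add: GW_q_def)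
  then show ?thesis using q_eq[of r p] False by simp
qed


lemma pmf_partial: "(\<Sum>k<(n::nat). pmf p k) \<le> 1"
proof -
  have "(\<Sum>k<n. pmf p k) = measure (measure_pmf p) {..<n}"
    by (rule measure_measure_pmf_finite[symmetric]) simp
  also have "\<dots> \<le> 1" by simp
  finally show ?thesis .
qed


lemma pmf_infsum: "infsum (pmf p) UNIV = 1" and pmf_summable: "pmf p summable_on UNIV"
proof -
  show 1: "infsum (pmf p) UNIV = 1"
    using infsetsum_infsum[OF pmf_abs_summable, of p UNIV] infsetsum_pmf_eq_1[of p UNIV] by simp
  show "pmf p summable_on UNIV"
    using 1 infsum_not_exists by fastforce
qed


lemma Fbar_eq: "Fbar p r = 1 - (\<Sum>k<Suc r. pmf p k)"
proof -
  have "Fbar p r = infsum (pmf p) (UNIV - {..r})"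
    unfolding Fbar_def by (rule arg_cong[where f="infsum (pmf p)"]) auto
  also have "\<dots> = infsum (pmf p) UNIV - infsum (pmf p) {..r}"
    by (rule infsum_Diff[OF pmf_summable]) auto
  finally show ?thesis by (simp add: pmf_infsum lessThan_Suc_atMost)
qed


lemma crit_has_sum:
  assumes "(\<lambda>k. real k * pmf p k) sums 1"
  shows "((\<lambda>k. real k * pmf p k) has_sum 1) UNIV"
  using assms by (intro sums_nonneg_imp_has_sum) auto


lemma S_eq:
  assumes "(\<lambda>k. real k * pmf p k) sums 1"
  shows "(\<Sum>\<^sub>\<infinity>i\<in>{r<..}. real i * pmf p i) = 1 - (\<Sum>k<Suc r. real k * pmf p k)"
proof -
  have sm: "(\<lambda>k. real k * pmf p k) summable_on UNIV" using crit_has_sum[OF assms] has_sum_imp_summable by blast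
  have "(\<Sum>\<^sub>\<infinity>i\<in>{r<..}. real i * pmf p i) = (\<Sum>\<^sub>\<infinity>i\<in>UNIV - {..r}. real i * pmf p i)"
    by (rule arg_cong[where f="infsum _"]) auto
  also have "\<dots> = (\<Sum>\<^sub>\<infinity>i\<in>UNIV. real i * pmf p i) - (\<Sum>\<^sub>\<infinity>i\<in>{..r}. real i * pmf p i)"
    by (rule infsum_Diff[OF sm]) auto
  finally show ?thesis using infsumI[OF crit_has_sum[OF assms]] by (simp add: lessThan_Suc_atMost)
qed


lemma rF_le_S:
  assumes "(\<lambda>k. real k * pmf p k) sums 1"
  shows "real r * Fbar p r \<le> (\<Sum>\<^sub>\<infinity>i\<in>{r<..}. real i * pmf p i)"
proof -
  have sm: "(\<lambda>k. real k * pmf p k) summable_on UNIV" using crit_has_sum[OF assms] has_sum_imp_summable by blast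
  have s1: "(\<lambda>k. real k * pmf p k) summable_on {r<..}" by (rule summable_on_subset_banach[OF sm]) auto
  have s2: "pmf p summable_on {r<..}" by (rule summable_on_subset_banach[OF pmf_summable]) auto
  have "real r * Fbar p r = (\<Sum>\<^sub>\<infinity>i\<in>{r<..}. real r * pmf p i)"
    unfolding Fbar_def by (rule infsum_cmult_right'[symmetric])
  also have "\<dots> \<le> (\<Sum>\<^sub>\<infinity>i\<in>{r<..}. real i * pmf p i)"
    by (rule infsum_mono) (auto intro: summable_on_cmult_right s1 s2 mult_right_mono)
  finally show ?thesis .
qed


lemma S_pos:
  assumes "(\<lambda>k. real k * pmf p k) sums 1" "infinite {r. pmf p r > 0}"
  shows "0 < (\<Sum>\<^sub>\<infinity>i\<in>{r<..}. real i * pmf p i)"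
proof -
  obtain i where i: "i > r" "pmf p i > 0" using assms(2) unfolding infinite_nat_iff_unbounded by auto
  have "(\<Sum>k<Suc r. real k * pmf p k) + real i * pmf p i = (\<Sum>k\<in>insert i {..<Suc r}. real k * pmf p k)"
    using i by (simp add: sum.insert)
  also have "\<dots> \<le> (\<Sum>k<Suc i. real k * pmf p k)"
    using i by (intro sum_mono2) auto
  also have "\<dots> \<le> 1" by (rule partial_le_1[OF assms(1)]) simp
  finally have le: "(\<Sum>k<Suc r. real k * pmf p k) + real i * pmf p i \<le> 1" .
  have "0 < real i * pmf p i" using i by simp
  with le have "(\<Sum>k<Suc r. real k * pmf p k) < 1" by linarith
  then show ?thesis by (simp add: S_eq[OF assms(1)])
qed


lemma F_pos:
  assumes "infinite {r. pmf p r > 0}"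
  shows "0 < Fbar p r"
proof -
  obtain i where i: "i > r" "pmf p i > 0" using assms unfolding infinite_nat_iff_unbounded by auto
  have "(\<Sum>k<Suc r. pmf p k) + pmf p i = (\<Sum>k\<in>insert i {..<Suc r}. pmf p k)"
    using i by (simp add: sum.insert)
  also have "\<dots> \<le> (\<Sum>k<Suc i. pmf p k)"
    using i by (intro sum_mono2) auto
  also have "\<dots> \<le> 1" by (rule pmf_partial)
  finally show ?thesis using i by (simp add: Fbar_eq)
qed



lemma Iq:
  assumes "1 \<le> r"
  shows "(GW_H p r - GW_H p (r-1)) - (\<Sum>k<r. pmf p k * (GW_H p r ^ k - GW_H p (r-1) ^ k))
         = pmf p r * GW_H p r ^ r"
proof -
  let ?b = "GW_H p r" and ?a = "GW_H p (r-1)"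
  have b: "?b = (\<Sum>k<r. pmf p k * ?b^k) + pmf p r * ?b^r"
    using H_fixpoint[of p r] by (simp add: lessThan_Suc_atMost[symmetric])
  have "{..r-1} = {..<r}" using assms by auto
  then have a: "?a = (\<Sum>k<r. pmf p k * ?a^k)"
    using H_fixpoint[of p "r-1"] by simp
  have "(\<Sum>k<r. pmf p k * (?b ^ k - ?a ^ k)) = (\<Sum>k<r. pmf p k * ?b^k) - (\<Sum>k<r. pmf p k * ?a^k)"
    by (simp add: right_diff_distrib sum_subtractf)
  then show ?thesis using a b by linarith
qed

lemma IH:
  "(1 - GW_H p r) - (\<Sum>k<Suc r. pmf p k * (1 ^ k - GW_H p r ^ k)) = Fbar p r"
proof -
  let ?h = "GW_H p r"
  have h: "?h = (\<Sum>k<Suc r. pmf p k * ?h^k)"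
    using H_fixpoint[of p r] by (simp add: lessThan_Suc_atMost)
  have "(\<Sum>k<Suc r. pmf p k * (1 ^ k - ?h ^ k)) = (\<Sum>k<Suc r. pmf p k) - (\<Sum>k<Suc r. pmf p k * ?h^k)"
    by (simp add: right_diff_distrib sum_subtractf)
  then show ?thesis using h Fbar_eq[of p r] by linarith
qed

lemma part_ii:
  assumes crit: "(\<lambda>k. real k * pmf p k) sums 1" and unb: "infinite {r. pmf p r > 0}" and r: "1 \<le> r"
  shows "GW_q p r \<le> pmf p r / (\<Sum>\<^sub>\<infinity>i\<in>{r<..}. real i * pmf p i)"
proof -
  let ?b = "GW_H p r" and ?a = "GW_H p (r-1)" and ?S = "(\<Sum>\<^sub>\<infinity>i\<in>{r<..}. real i * pmf p i)"
  have ab: "0 \<le> ?a" "?a \<le> ?b" "?b \<le> 1" using H_nonneg H_mono H_le1 by auto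
  have "(?b - ?a) * (1 - (\<Sum>k<r. real k * pmf p k)) \<le> pmf p r * ?b ^ r"
    using sumL0[OF ab, of "pmf p" r] Iq[OF r, of p] by simp
  also have "\<dots> \<le> pmf p r" using ab by (simp add: mult_left_le power_le_one)
  finally have 1: "(?b - ?a) * (1 - (\<Sum>k<r. real k * pmf p k)) \<le> pmf p r" .
  have "?S = 1 - (\<Sum>k<Suc r. real k * pmf p k)" by (rule S_eq[OF crit])
  also have "\<dots> \<le> 1 - (\<Sum>k<r. real k * pmf p k)" by simp
  finally have "(?b - ?a) * ?S \<le> pmf p r"
    using 1 ab by (smt (verit) mult_left_mono)
  then show ?thesis using S_pos[OF crit unb, of r] by (simp add: q_eq[OF r] field_simps)
qed

lemma part_v:
  assumes crit: "(\<lambda>k. real k * pmf p k) sums 1" and unb: "infinite {r. pmf p r > 0}"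
  shows "GW_Hbar p r \<le> Fbar p r / (\<Sum>\<^sub>\<infinity>i\<in>{r<..}. real i * pmf p i)"
proof -
  let ?h = "GW_H p r" and ?S = "(\<Sum>\<^sub>\<infinity>i\<in>{r<..}. real i * pmf p i)"
  have ab: "0 \<le> ?h" "?h \<le> 1" "(1::real) \<le> 1" using H_nonneg H_le1 by auto
  have "(1 - ?h) * (1 - (\<Sum>k<Suc r. real k * pmf p k)) \<le> Fbar p r"
    using sumL0[OF ab, of "pmf p" "Suc r"] IH[of p r] by simp
  then have "(1 - ?h) * ?S \<le> Fbar p r" by (simp add: S_eq[OF crit])
  then show ?thesis using S_pos[OF crit unb, of r] by (simp add: GW_Hbar_def field_simps)
qed

lemma Hbar_le:
  assumes crit: "(\<lambda>k. real k * pmf p k) sums 1" and unb: "infinite {r. pmf p r > 0}"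
  shows "real r * GW_Hbar p r \<le> 1"
proof -
  let ?S = "(\<Sum>\<^sub>\<infinity>i\<in>{r<..}. real i * pmf p i)"
  have S: "0 < ?S" by (rule S_pos[OF crit unb])
  have "real r * GW_Hbar p r \<le> real r * (Fbar p r / ?S)"
    using part_v[OF crit unb, of r] by (intro mult_left_mono) auto
  also have "\<dots> = (real r * Fbar p r) / ?S" by simp
  also have "\<dots> \<le> 1" using rF_le_S[OF crit, of r] S by simp
  finally show ?thesis .
qed


lemma small_gap:
  fixes x :: real
  assumes "real r * x \<le> 1" "1 \<le> N" "N \<le> r"
  shows "x \<le> 1 / real N"
proof -
  have r0: "0 < real r" using assms by simp
  have "x \<le> 1 / real r" using assms(1) r0 by (simp add: field_simps)
  also have "\<dots> \<le> 1 / real N" using assms by (intro divide_left_mono) auto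
  finally show ?thesis .
qed

lemma ratio_bound:
  fixes d V X c :: real
  assumes "0 < c" "c \<le> V" "0 < X" "d^2 / 2 * V \<le> X"
  shows "d^2 / X \<le> 2 / c"
proof -
  have "d^2 / 2 * c \<le> d^2 / 2 * V" using assms by (intro mult_left_mono) auto
  then have "d^2 * c \<le> 2 * X" using assms by simp
  then show ?thesis using assms by (simp add: field_simps)
qed

lemma part_iv:
  assumes crit: "(\<lambda>k. real k * pmf p k) sums 1" and unb: "infinite {r. pmf p r > 0}"
  shows "filterlim (\<lambda>r. GW_Hbar p r / Fbar p r) at_top sequentially"
  unfolding filterlim_at_top
proof
  fix Z :: real
  define e where "e = 1 / max Z 1"
  have e: "0 < e" by (simp add: e_def)
  obtain N where N1: "N \<ge> 1" and N: "\<forall>n\<ge>N. \<forall>a. 0 \<le> a \<and> a \<le> 1 \<and> 1 - a \<le> 1 / real N \<longrightarrow> 1 - e \<le> (\<Sum>k<n. real k * pmf p k * a^k)"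
    using Lim1[OF crit pmf_nonneg e] by blast
  show "eventually (\<lambda>r. Z \<le> GW_Hbar p r / Fbar p r) sequentially"
    using eventually_ge_at_top[of N]
  proof eventually_elim
    case (elim r)
    let ?h = "GW_H p r"
    have ab: "0 \<le> ?h" "?h \<le> 1" "(1::real) \<le> 1" using H_nonneg H_le1 by auto
    have gap: "1 - ?h \<le> 1 / real N"
      using small_gap[OF Hbar_le[OF crit unb, of r] N1 elim] by (simp add: GW_Hbar_def)
    have G: "1 - e \<le> (\<Sum>k<Suc r. real k * pmf p k * ?h^k)"
      using N[rule_format, of "Suc r" ?h] elim ab gap by (simp del: sum.lessThan_Suc)
    have "Fbar p r \<le> (1 - ?h) * (1 - (\<Sum>k<Suc r. real k * pmf p k * ?h^k))"
      using sumL1[OF ab, of "pmf p" "Suc r"] IH[of p r] by simp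
    also have "\<dots> \<le> (1 - ?h) * e" using G ab by (intro mult_left_mono) auto
    finally have F: "Fbar p r \<le> (1 - ?h) * e" .
    have Fp: "0 < Fbar p r" by (rule F_pos[OF unb])
    have "Z \<le> 1 / e" by (simp add: e_def)
    also have "1 / e \<le> (1 - ?h) / Fbar p r" using F Fp e by (simp add: field_simps)
    finally show ?case by (simp add: GW_Hbar_def)
  qed
qed

lemma part_i:
  assumes crit: "(\<lambda>k. real k * pmf p k) sums 1" and unb: "infinite {r. pmf p r > 0}"
  shows "filterlim (\<lambda>r. GW_q p r / pmf p r) at_top (sequentially \<sqinter> principal {r. pmf p r > 0})"
  unfolding filterlim_at_top
proof
  fix Z :: real
  define e where "e = exp (-2) / max Z 1"
  have e: "0 < e" by (simp add: e_def)
  obtain N where N1: "N \<ge> 1" and N: "\<forall>n\<ge>N. \<forall>a. 0 \<le> a \<and> a \<le> 1 \<and> 1 - a \<le> 1 / real N \<longrightarrow> 1 - e \<le> (\<Sum>k<n. real k * pmf p k * a^k)"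
    using Lim1[OF crit pmf_nonneg e] by blast
  show "eventually (\<lambda>r. Z \<le> GW_q p r / pmf p r) (sequentially \<sqinter> principal {r. pmf p r > 0})"
    unfolding eventually_inf_principal
    using eventually_ge_at_top[of "N + 2"]
  proof eventually_elim
    case (elim r)
    show ?case
    proof
      assume pr: "r \<in> {r. pmf p r > 0}"
      have r1: "1 \<le> r" using elim by simp
      let ?b = "GW_H p r" and ?a = "GW_H p (r-1)"
      have ab: "0 \<le> ?a" "?a \<le> ?b" "?b \<le> 1" using H_nonneg H_mono H_le1 by auto
      have gap: "1 - ?a \<le> 1 / real N"
        using small_gap[OF Hbar_le[OF crit unb, of "r-1"] N1] elim by (simp add: GW_Hbar_def)
      have G: "1 - e \<le> (\<Sum>k<r. real k * pmf p k * ?a^k)"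
        using N[rule_format, of r ?a] elim ab gap by simp
      have "pmf p r * ?b^r \<le> (?b - ?a) * (1 - (\<Sum>k<r. real k * pmf p k * ?a^k))"
        using sumL1[OF ab, of "pmf p" r] Iq[OF r1, of p] by simp
      also have "\<dots> \<le> (?b - ?a) * e" using G ab by (intro mult_left_mono) auto
      finally have 1: "pmf p r * ?b^r \<le> (?b - ?a) * e" .
      have "exp (-2) \<le> (1 - GW_Hbar p r)^r"
        using exp_bound_pow[of "GW_Hbar p r" r] Hbar_le[OF crit unb, of r] elim ab
        by (simp add: GW_Hbar_def)
      then have 2: "exp (-2) \<le> ?b^r" by (simp add: GW_Hbar_def)
      have pp: "0 < pmf p r" using pr by simp
      have "pmf p r * exp (-2) \<le> pmf p r * ?b^r" using 2 pp by (intro mult_left_mono) auto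
      with 1 have 3: "pmf p r * exp (-2) \<le> (?b - ?a) * e" by linarith
      have "Z \<le> exp (-2) / e" by (simp add: e_def)
      also have "exp (-2) / e \<le> (?b - ?a) / pmf p r" using 3 pp e by (simp add: field_simps)
      finally show "Z \<le> GW_q p r / pmf p r" by (simp add: q_eq[OF r1])
    qed
  qed
qed


lemma var_nonneg: "0 \<le> variance_ext p"
  unfolding variance_ext_def by (intro suminf_0_le) auto

lemma part_iii:
  assumes crit: "(\<lambda>k. real k * pmf p k) sums 1" and unb: "infinite {r. pmf p r > 0}"
  shows "Limsup (sequentially \<sqinter> principal {r. pmf p r > 0})
           (\<lambda>r. ereal ((GW_q p r)\<^sup>2 / pmf p r)) \<le> 2 / variance_ext p"
proof (rule limsup_conclude[OF var_nonneg])
  fix c :: real assume c0: "0 < c" and c: "ereal c < variance_ext p"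
  obtain K N where N1: "N \<ge> 1" and KN: "\<forall>a. 0 \<le> a \<and> a \<le> 1 \<and> 1 - a \<le> 1 / real N \<longrightarrow>
            c \<le> (\<Sum>k<K. real k * (real k - 1) * pmf p k * a^k)"
    using Lim2[OF crit pmf_nonneg pmf_partial c[unfolded variance_ext_def]] by blast
  show "Limsup (sequentially \<sqinter> principal {r. pmf p r > 0}) (\<lambda>r. ereal ((GW_q p r)\<^sup>2 / pmf p r)) \<le> ereal (2 / c)"
  proof (rule Limsup_bounded)
    show "eventually (\<lambda>r. ereal ((GW_q p r)\<^sup>2 / pmf p r) \<le> ereal (2 / c)) (sequentially \<sqinter> principal {r. pmf p r > 0})"
      unfolding eventually_inf_principal
      using eventually_ge_at_top[of "N + K + 1"]
    proof eventually_elim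
      case (elim r)
      show ?case
      proof
        assume pr: "r \<in> {r. pmf p r > 0}"
        have r1: "1 \<le> r" using elim by simp
        let ?b = "GW_H p r" and ?a = "GW_H p (r-1)"
        have ab: "0 \<le> ?a" "?a \<le> ?b" "?b \<le> 1" using H_nonneg H_mono H_le1 by auto
        have gap: "1 - ?a \<le> 1 / real N"
          using small_gap[OF Hbar_le[OF crit unb, of "r-1"] N1] elim by (simp add: GW_Hbar_def)
        have V: "c \<le> (\<Sum>k<K. real k * (real k - 1) * pmf p k * ?a^k)"
          using KN ab gap by auto
        have "(?b - ?a)^2 / 2 * (\<Sum>k<K. real k * (real k - 1) * pmf p k * ?a^k) \<le> pmf p r * ?b^r"
          using sumL2[OF ab, of "pmf p" K r] Iq[OF r1, of p] elim partial_le_1[OF crit pmf_nonneg, of r]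
          by simp
        also have "\<dots> \<le> pmf p r" using ab by (simp add: mult_left_le power_le_one)
        finally have "(?b - ?a)^2 / 2 * (\<Sum>k<K. real k * (real k - 1) * pmf p k * ?a^k) \<le> pmf p r" .
        from ratio_bound[OF c0 V _ this] pr have "(?b - ?a)^2 / pmf p r \<le> 2 / c" by simp
        then show "ereal ((GW_q p r)\<^sup>2 / pmf p r) \<le> ereal (2 / c)" by (simp add: q_eq[OF r1])
      qed
    qed
  qed
qed

lemma part_vi:
  assumes crit: "(\<lambda>k. real k * pmf p k) sums 1" and unb: "infinite {r. pmf p r > 0}"
  shows "limsup (\<lambda>r. ereal ((GW_Hbar p r)\<^sup>2 / Fbar p r)) \<le> 2 / variance_ext p"
proof (rule limsup_conclude[OF var_nonneg])
  fix c :: real assume c0: "0 < c" and c: "ereal c < variance_ext p"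
  obtain K N where N1: "N \<ge> 1" and KN: "\<forall>a. 0 \<le> a \<and> a \<le> 1 \<and> 1 - a \<le> 1 / real N \<longrightarrow>
            c \<le> (\<Sum>k<K. real k * (real k - 1) * pmf p k * a^k)"
    using Lim2[OF crit pmf_nonneg pmf_partial c[unfolded variance_ext_def]] by blast
  show "limsup (\<lambda>r. ereal ((GW_Hbar p r)\<^sup>2 / Fbar p r)) \<le> ereal (2 / c)"
  proof (rule Limsup_bounded)
    show "eventually (\<lambda>r. ereal ((GW_Hbar p r)\<^sup>2 / Fbar p r) \<le> ereal (2 / c)) sequentially"
      using eventually_ge_at_top[of "N + K"]
    proof eventually_elim
      case (elim r)
      let ?h = "GW_H p r"
      have ab: "0 \<le> ?h" "?h \<le> 1" "(1::real) \<le> 1" using H_nonneg H_le1 by auto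
      have gap: "1 - ?h \<le> 1 / real N"
        using small_gap[OF Hbar_le[OF crit unb, of r] N1] elim by (simp add: GW_Hbar_def)
      have V: "c \<le> (\<Sum>k<K. real k * (real k - 1) * pmf p k * ?h^k)"
        using KN ab gap by auto
      have "(1 - ?h)^2 / 2 * (\<Sum>k<K. real k * (real k - 1) * pmf p k * ?h^k) \<le> Fbar p r"
        using sumL2[OF ab, of "pmf p" K "Suc r"] IH[of p r] elim partial_le_1[OF crit pmf_nonneg, of "Suc r"]
        by (simp del: sum.lessThan_Suc)
      from ratio_bound[OF c0 V F_pos[OF unb] this] have "(1 - ?h)^2 / Fbar p r \<le> 2 / c" .
      then show "ereal ((GW_Hbar p r)\<^sup>2 / Fbar p r) \<le> ereal (2 / c)" by (simp add: GW_Hbar_def)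
    qed
  qed
qed

theorem theorem2p8:
  fixes p :: "nat pmf"
  assumes critical: "(\<lambda>k. real k * pmf p k) sums 1"
    and unbounded: "infinite {r. pmf p r > 0}"
  shows "filterlim (\<lambda>r. GW_q p r / pmf p r) at_top
           (sequentially \<sqinter> principal {r. pmf p r > 0})
       \<and> (\<forall>r\<ge>1. GW_q p r \<le> pmf p r / (\<Sum>\<^sub>\<infinity>i\<in>{r<..}. real i * pmf p i))
       \<and> Limsup (sequentially \<sqinter> principal {r. pmf p r > 0})
           (\<lambda>r. ereal ((GW_q p r)\<^sup>2 / pmf p r)) \<le> 2 / variance_ext p
       \<and> filterlim (\<lambda>r. GW_Hbar p r / Fbar p r) at_top sequentially
       \<and> (\<forall>r\<ge>1. GW_Hbar p r \<le> Fbar p r / (\<Sum>\<^sub>\<infinity>i\<in>{r<..}. real i * pmf p i))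
       \<and> limsup (\<lambda>r. ereal ((GW_Hbar p r)\<^sup>2 / Fbar p r)) \<le> 2 / variance_ext p"
  using part_i[OF critical unbounded] part_ii[OF critical unbounded] part_iii[OF critical unbounded]
    part_iv[OF critical unbounded] part_v[OF critical unbounded] part_vi[OF critical unbounded]
  by blast


end
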